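(* If $n\ge k\ge 3$, then the maximum defining $g_k(n)$ is achieved by an equitable partition; that is, there is a partition $n_1+\dots+n_k=n$ with $|n_i-n_j|\le1$ for all $i\ne j$ such that $g_k(n)=\sum_{i=1}^k g_k(n_i)+\prod_{i=1}^k n_i$.
   Context: The function $g_k$ is defined by: $g_k(s)=0$ for $0\le s<k$, and for $s\ge k\ge 3$, $g_k(s)=\max\left(\sum_{i=1}^k g_k(s_i)+\prod_{i=1}^k s_i\right)$, the maximum over all partitions $s_1+\dots+s_k=s$ into nonnegative integers with $s_i<s$ for each $i$. *)

theory Defs
  imports Main
begin

definition parts :: "nat \<Rightarrow> nat \<Rightarrow> nat list set" where
  "parts k s = {xs. length xs = k \<and> sum_list xs = s \<and> (\<forall>x\<in>set xs. x < s)}"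

function g :: "nat \<Rightarrow> nat \<Rightarrow> nat" where
  "g k s = (if s < k then 0
            else Max ((\<lambda>xs. sum_list (map (g k) xs) + prod_list xs) ` parts k s))"
  by auto
termination
  by (relation "measure snd") (auto simp: parts_def)

end

theory Submission imports Defs "HOL-Library.Multiset" begin

function ff :: "nat \<Rightarrow> nat \<Rightarrow> nat" where
  "ff k n = (if n < k \<or> k < 3 then 0 else
     (n mod k) * ff k (n div k + 1) + (k - n mod k) * ff k (n div k)
     + (n div k + 1) ^ (n mod k) * (n div k) ^ (k - n mod k))"
  by auto
termination
proof (relation "measure snd", goal_cases)
  case 1 show ?case by simp
next
  case (2 k n)
  then have "n div k \<le> n div 3" "3 \<le> k" "k \<le> n" by (auto simp: div_le_mono2)
  then show ?case by (simp; linarith?)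
next
  case (3 k n)
  then have "n div k \<le> n div 3" "3 \<le> k" "k \<le> n" by (auto simp: div_le_mono2)
  then show ?case by (simp; linarith?)
qed

declare ff.simps[simp del]

lemma ff_small: "n < k \<Longrightarrow> ff k n = 0"
  by (subst ff.simps) simp

lemma ff_rec:
  assumes "3 \<le> k"
  shows "ff k n = (n mod k) * ff k (n div k + 1) + (k - n mod k) * ff k (n div k)
     + (n div k + 1) ^ (n mod k) * (n div k) ^ (k - n mod k)"
proof (cases "n < k")
  case True
  then have "ff k 1 = 0" "ff k 0 = 0" using assms by (auto intro: ff_small)
  then show ?thesis using True by (simp add: ff_small)
next
  case False
  then show ?thesis using assms by (subst ff.simps) simp
qed

definition pm :: "nat \<Rightarrow> nat \<Rightarrow> nat" where
  "pm j m = (m div j + 1) ^ (m mod j) * (m div j) ^ (j - m mod j)"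

definition Df :: "nat \<Rightarrow> nat \<Rightarrow> int" where
  "Df k m = int (ff k (Suc m)) - int (ff k m)"

lemma divmod_lin:
  fixes q j r :: nat
  assumes "r < j" shows "(q * j + r) div j = q \<and> (q * j + r) mod j = r"
proof -
  have d: "(q*j+r) div j = q" using assms by (intro div_nat_eqI) (auto simp: algebra_simps)
  moreover have "(q*j+r) mod j = r" using d by (metis add_diff_cancel_left' minus_div_mult_eq_mod mult.commute)
  ultimately show ?thesis by simp
qed

lemma pm_inc:
  assumes "2 \<le> j"
  shows "pm j (Suc m) = pm j m + pm (j - 1) (m - m div j)"
proof -
  define q r where "q = m div j" and "r = m mod j"
  have m: "m = q * j + r" unfolding q_def r_def by simp
  have rj: "r < j" unfolding r_def using assms by simp
  show ?thesis
  proof (cases "Suc r < j")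
    case True
    define e where "e = j - 1 - r"
    have e1: "j - r = Suc e" "j - Suc r = e" "j - 1 - r = e" using True unfolding e_def by auto
    have s: "Suc m = q * j + Suc r" using m by simp
    have d1: "Suc m div j = q" "Suc m mod j = Suc r" using divmod_lin[OF True, of q] s by auto
    have mq: "m - m div j = q * (j - 1) + r" using m assms unfolding q_def[symmetric]
      by (simp add: algebra_simps diff_mult_distrib2)
    have d2: "(m - q) div (j - 1) = q" "(m - q) mod (j - 1) = r"
      using divmod_lin[of r "j - 1" q] True mq unfolding q_def by auto
    show ?thesis unfolding pm_def d1 d2 q_def[symmetric] r_def[symmetric] e1
      by (simp add: algebra_simps)
  next
    case False
    then have r: "r = j - 1" using rj by simp
    have s: "Suc m = Suc q * j + 0" using m r assms by simp
    have d1: "Suc m div j = Suc q" "Suc m mod j = 0" using divmod_lin[of 0 j "Suc q"] s assms by auto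
    have mq: "m - m div j = Suc q * (j - 1) + 0" using m r assms unfolding q_def[symmetric]
      by (simp add: algebra_simps diff_mult_distrib2)
    have d2: "(m - q) div (j - 1) = Suc q" "(m - q) mod (j - 1) = 0"
      using divmod_lin[of 0 "j - 1" "Suc q"] assms mq unfolding q_def by auto
    have jj: "j = Suc (j - 1)" using assms by simp
    have pk: "(Suc q)^j = (Suc q)^(j-1) * Suc q" by (metis jj power_Suc2)
    have j1: "j - (j - Suc 0) = 1" using assms by simp
    show ?thesis unfolding pm_def d1 d2 q_def[symmetric] r_def[symmetric] r
      by (simp add: pk j1 algebra_simps)
  qed
qed

lemma Df_rec:
  assumes "3 \<le> k"
  shows "Df k m = Df k (m div k) + int (pm (k - 1) (m - m div k))"
proof -
  define q r where "q = m div k" and "r = m mod k"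
  have m: "m = q * k + r" unfolding q_def r_def by simp
  have rk: "r < k" unfolding r_def using assms by simp
  have fm: "ff k m = r * ff k (Suc q) + (k - r) * ff k q + (Suc q) ^ r * q ^ (k - r)"
    using ff_rec[OF assms, of m] unfolding q_def r_def by simp
  show ?thesis
  proof (cases "Suc r < k")
    case True
    define e where "e = k - 1 - r"
    have e1: "k - r = Suc e" "k - Suc r = e" "k - 1 - r = e" using True unfolding e_def by auto
    have s: "Suc m = q * k + Suc r" using m by simp
    have d1: "Suc m div k = q" "Suc m mod k = Suc r" using divmod_lin[OF True, of q] s by auto
    have fs: "ff k (Suc m) = Suc r * ff k (Suc q) + (k - Suc r) * ff k q + (Suc q) ^ Suc r * q ^ (k - Suc r)"
      using ff_rec[OF assms, of "Suc m"] d1 by simp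
    have mq: "m - m div k = q * (k - 1) + r" using m assms unfolding q_def[symmetric]
      by (simp add: algebra_simps diff_mult_distrib2)
    have d2: "(m - q) div (k - 1) = q" "(m - q) mod (k - 1) = r"
      using divmod_lin[of r "k - 1" q] True mq unfolding q_def by auto
    show ?thesis unfolding Df_def pm_def d2 fs fm q_def[symmetric] e1
      by (simp add: algebra_simps)
  next
    case False
    then have r: "r = k - 1" using rk by simp
    have s: "Suc m = Suc q * k + 0" using m r assms by simp
    have d1: "Suc m div k = Suc q" "Suc m mod k = 0" using divmod_lin[of 0 k "Suc q"] s assms by auto
    have fs: "ff k (Suc m) = k * ff k (Suc q) + (Suc q) ^ k"
      using ff_rec[OF assms, of "Suc m"] d1 by simp
    have mq: "m - m div k = Suc q * (k - 1) + 0" using m r assms unfolding q_def[symmetric]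
      by (simp add: algebra_simps diff_mult_distrib2)
    have d2: "(m - q) div (k - 1) = Suc q" "(m - q) mod (k - 1) = 0"
      using divmod_lin[of 0 "k - 1" "Suc q"] assms mq unfolding q_def by auto
    have kk: "k = Suc (k - 1)" using assms by simp
    have kr: "k - r = 1" using r assms by simp
    have pk: "(Suc q)^k = (Suc q)^(k-1) * Suc q" by (metis kk power_Suc2)
    show ?thesis unfolding Df_def pm_def d2 fs fm q_def[symmetric] kr
      using assms apply (simp only: r pk of_nat_add of_nat_mult of_nat_power)
      by (simp add: of_nat_diff algebra_simps)
  qed
qed

lemma pm_one: "pm 1 m = m" unfolding pm_def by simp

lemma pm_mono:
  assumes "1 \<le> j" "m1 \<le> m2" shows "pm j m1 \<le> pm j m2"
proof (cases "j = 1")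
  case True then show ?thesis using assms pm_one[of m1] pm_one[of m2] by simp
next
  case False
  then have "2 \<le> j" using assms by simp
  then have "\<And>m. pm j m \<le> pm j (Suc m)" using pm_inc by simp
  then show ?thesis using assms(2) by (rule lift_Suc_mono_le)
qed

lemma minus_div_mono:
  fixes k :: nat
  assumes "m1 \<le> m2" shows "m1 - m1 div k \<le> m2 - m2 div k"
proof -
  have "\<And>m::nat. m - m div k \<le> Suc m - Suc m div k"
  proof -
    fix m :: nat
    have "Suc m div k \<le> Suc (m div k)" by (simp add: div_Suc)
    moreover have "m div k \<le> m" by simp
    moreover have "Suc m div k \<le> Suc m" by simp
    ultimately show "m - m div k \<le> Suc m - Suc m div k" by linarith
  qed
  then show ?thesis using assms by (rule lift_Suc_mono_le)
qed

lemma pm_conv: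
  assumes "2 \<le> j" "u \<le> y"
  shows "int (pm j (u + d)) - int (pm j u) \<le> int (pm j (y + d)) - int (pm j y)"
proof (induction d)
  case 0 then show ?case by simp
next
  case (Suc d)
  have "pm (j - 1) ((u + d) - (u + d) div j) \<le> pm (j - 1) ((y + d) - (y + d) div j)"
    using assms by (intro pm_mono minus_div_mono) auto
  then show ?case using Suc pm_inc[OF assms(1), of "u + d"] pm_inc[OF assms(1), of "y + d"] by simp
qed

lemma pm_conv2:
  assumes "2 \<le> j" "x + y = u + v" "x \<le> v" "y \<le> v"
  shows "int (pm j x) + int (pm j y) \<le> int (pm j u) + int (pm j v)"
proof -
  have "u \<le> y" "u \<le> x" using assms by auto
  moreover have e: "y + (x - u) = v" "u + (x - u) = x" using assms \<open>u \<le> x\<close> by auto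
  ultimately show ?thesis using pm_conv[OF assms(1) \<open>u \<le> y\<close>, of "x - u"] unfolding e by simp
qed

lemma lemA:
  assumes k: "3 \<le> k"
  shows "1 \<le> a \<Longrightarrow> a \<le> n \<Longrightarrow> n \<le> k * a \<Longrightarrow>
    Df k (a - 1) + int (pm (k - 1) (n - a)) \<le> Df k (n - 1)"
proof (induction n arbitrary: a rule: less_induct)
  case (less n)
  show ?case
  proof (cases "n = 1")
    case True
    then have "a = 1" using less by simp
    have "pm (k - 1) 0 = 0" unfolding pm_def using k by simp
    then show ?thesis using True \<open>a = 1\<close> by simp
  next
    case False
    then have n2: "2 \<le> n" using less by simp
    define n' a' where "n' = (n - 1) div k" and "a' = (a - 1) div k"
    have a'n': "a' \<le> n'" unfolding a'_def n'_def using less by (simp add: div_le_mono)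
    have "n' * k \<le> n - 1" unfolding n'_def by simp
    moreover have "n - 1 < k * a" using less by simp
    ultimately have n'a: "n' \<le> a - 1"
      unfolding n'_def using less_mult_imp_div_less[of "n - 1" a k] by (simp add: mult.commute)
    have "(a - 1) mod k < k" using k by simp
    moreover have "a' * k + (a - 1) mod k = a - 1" unfolding a'_def by simp
    moreover have "k * (a' + 1) = a' * k + k" by (simp add: algebra_simps)
    ultimately have "a - 1 < k * (a' + 1)" by linarith
    then have c3: "n' + 1 \<le> k * (a' + 1)" using n'a by simp
    have "(n - 1) div k < n - 1" using n2 k by (intro div_less_dividend) auto
    then have lt: "n' + 1 < n" unfolding n'_def by simp
    have IH: "Df k a' + int (pm (k - 1) (n' - a')) \<le> Df k n'"
      using less.IH[OF lt, of "a' + 1"] a'n' c3 by simp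
    have r1: "Df k (n - 1) = Df k n' + int (pm (k - 1) (n - 1 - n'))"
      unfolding n'_def by (rule Df_rec[OF k])
    have r2: "Df k (a - 1) = Df k a' + int (pm (k - 1) (a - 1 - a'))"
      unfolding a'_def by (rule Df_rec[OF k])
    have mono: "a - 1 - a' \<le> n - 1 - n'" unfolding a'_def n'_def
      using less by (intro minus_div_mono) simp
    have "a' \<le> a - 1" unfolding a'_def by simp
    have "n' \<le> n - 1" unfolding n'_def by simp
    have cv: "int (pm (k - 1) (a - 1 - a')) + int (pm (k - 1) (n - a))
        \<le> int (pm (k - 1) (n' - a')) + int (pm (k - 1) (n - 1 - n'))"
      apply (rule pm_conv2)
      using k less a'n' n'a mono \<open>a' \<le> a - 1\<close> \<open>n' \<le> n - 1\<close> by auto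
    show ?thesis using IH r1 r2 cv by linarith
  qed
qed


lemma max_split:
  fixes M :: "nat multiset"
  assumes "M \<noteq> {#}"
  shows "\<exists>x R. M = add_mset x R \<and> (\<forall>y\<in>#R. y \<le> x)"
proof -
  define x where "x = Max (set_mset M)"
  have xin: "x \<in># M" unfolding x_def using assms by (simp add: Max_in)
  have "\<forall>y\<in>#M. y \<le> x" unfolding x_def by simp
  moreover have "M = add_mset x (M - {#x#})" using xin by simp
  ultimately show ?thesis by (metis in_diffD)
qed

lemma sum_le_size_max:
  fixes M :: "nat multiset"
  shows "(\<forall>y\<in>#M. y \<le> x) \<Longrightarrow> sum_mset M \<le> size M * x"
  by (induction M) auto

lemma all_zero_sum:
  fixes M :: "nat multiset"
  shows "sum_mset M = 0 \<Longrightarrow> y \<in># M \<Longrightarrow> y = 0"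
  by (induction M) auto

lemma sum_image_zero:
  "(\<forall>z\<in>#M. f z = 0) \<Longrightarrow> sum_mset (image_mset f M) = (0::nat)"
  by (induction M) auto

lemma amgm_step:
  assumes j: "1 \<le> j"
    and IHj: "\<And>R. size R = j \<Longrightarrow> prod_mset R \<le> pm j (sum_mset R)"
  shows "size M = Suc j \<Longrightarrow> prod_mset M \<le> pm (Suc j) (sum_mset M)"
proof (induction "sum_mset M" arbitrary: M)
  case 0
  then have "M \<noteq> {#}" by auto
  then obtain y where "y \<in># M" by blast
  then have "y = 0" using all_zero_sum 0 by metis
  then have "prod_mset M = 0" using \<open>y \<in># M\<close> by (simp add: prod_mset_zero_iff)
  then show ?case by (simp del: prod_mset_zero_iff)
next
  case (Suc m)
  then have "M \<noteq> {#}" by auto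
  then obtain x R where M: "M = add_mset x R" and xm: "\<forall>y\<in>#R. y \<le> x" using max_split by blast
  have sR: "size R = j" using Suc M by simp
  have sum: "x + sum_mset R = Suc m" using Suc M by simp
  have "sum_mset R \<le> j * x" using sum_le_size_max[OF xm] sR by simp
  then have kx: "Suc m \<le> Suc j * x" using sum by simp
  then have x1: "1 \<le> x" by (cases x) auto
  define M' where "M' = add_mset (x - 1) R"
  have "sum_mset M' = m" unfolding M'_def using sum x1 by simp
  moreover have "size M' = Suc j" unfolding M'_def using sR by simp
  ultimately have IH: "prod_mset M' \<le> pm (Suc j) m" using Suc.hyps(1)[of M'] by simp
  have pM: "prod_mset M = prod_mset M' + prod_mset R" unfolding M M'_def using x1
    by (cases x) (auto simp: algebra_simps)
  have "m div Suc j < x" using kx by (simp add: less_mult_imp_div_less mult.commute)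
  then have "sum_mset R \<le> m - m div Suc j" using sum by simp
  then have "pm j (sum_mset R) \<le> pm j (m - m div Suc j)" using j by (intro pm_mono)
  moreover have "prod_mset R \<le> pm j (sum_mset R)" using IHj sR by simp
  moreover have "pm (Suc j) (Suc m) = pm (Suc j) m + pm j (m - m div Suc j)"
    using pm_inc[of "Suc j" m] j by simp
  ultimately show ?case using IH pM Suc.hyps(2) by simp
qed

lemma amgm:
  fixes M :: "nat multiset"
  shows "1 \<le> j \<Longrightarrow> size M = j \<Longrightarrow> prod_mset M \<le> pm j (sum_mset M)"
proof (induction j arbitrary: M rule: nat_induct_at_least)
  case base
  then obtain x where "M = {#x#}" by (metis One_nat_def size_1_singleton_mset)
  then show ?case by (simp add: pm_one[unfolded One_nat_def])
next
  case (Suc j)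
  then show ?case using amgm_step[of j M] by blast
qed

lemma star:
  assumes k: "3 \<le> k"
  shows "size M = k \<Longrightarrow>
    int (sum_mset (image_mset (ff k) M)) + int (prod_mset M) \<le> int (ff k (sum_mset M))"
proof (induction "sum_mset M" arbitrary: M)
  case 0
  then have "M \<noteq> {#}" using k by auto
  then obtain y where "y \<in># M" by blast
  then have "y = 0" using all_zero_sum 0 by metis
  then have p0: "prod_mset M = 0" using \<open>y \<in># M\<close> by (simp add: prod_mset_zero_iff)
  have "\<forall>z\<in>#M. ff k z = 0"
  proof
    fix z assume "z \<in># M"
    then have "z = 0" using all_zero_sum 0 by metis
    then show "ff k z = 0" using k by (intro ff_small) simp
  qed
  then have s0: "sum_mset (image_mset (ff k) M) = 0" by (rule sum_image_zero)
  show ?case unfolding s0 p0 by simp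
next
  case (Suc m)
  then have "M \<noteq> {#}" by auto
  then obtain x R where M: "M = add_mset x R" and xm: "\<forall>y\<in>#R. y \<le> x" using max_split by blast
  have sR: "size R = k - 1" using Suc M by simp
  have sum: "x + sum_mset R = Suc m" using Suc M by simp
  have "sum_mset R \<le> (k - 1) * x" using sum_le_size_max[OF xm] sR by simp
  moreover have "k * x = (k - 1) * x + x" using k by (cases k) auto
  ultimately have kx: "Suc m \<le> k * x" using sum by linarith
  then have x1: "1 \<le> x" by (cases x) auto
  define M' where "M' = add_mset (x - 1) R"
  have "sum_mset M' = m" unfolding M'_def using sum x1 by simp
  moreover have "size M' = k" unfolding M'_def using sR k by simp
  ultimately have IH: "int (sum_mset (image_mset (ff k) M')) + int (prod_mset M') \<le> int (ff k m)"
    using Suc.hyps(1)[of M'] by simp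
  have pM: "prod_mset M = prod_mset M' + prod_mset R" unfolding M M'_def using x1
    by (cases x) (auto simp: algebra_simps)
  have fM: "int (sum_mset (image_mset (ff k) M)) = int (sum_mset (image_mset (ff k) M'))
      + Df k (x - 1)" unfolding M M'_def Df_def using x1 by simp
  have A: "Df k (x - 1) + int (pm (k - 1) (Suc m - x)) \<le> Df k (Suc m - 1)"
    using lemA[OF k, of x "Suc m"] x1 kx sum by simp
  have "prod_mset R \<le> pm (k - 1) (sum_mset R)" using amgm[of "k - 1" R] sR k by simp
  moreover have "sum_mset R = Suc m - x" using sum by simp
  moreover have "Df k (Suc m - 1) = int (ff k (Suc m)) - int (ff k m)" unfolding Df_def by simp
  ultimately show ?case using IH pM fM A Suc.hyps(2) by simp
qed


declare g.simps[simp del]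

definition eql :: "nat \<Rightarrow> nat \<Rightarrow> nat list" where
  "eql k n = replicate (n mod k) (n div k + 1) @ replicate (k - n mod k) (n div k)"

lemma eql_props:
  assumes k: "3 \<le> k"
  shows "length (eql k n) = k" "sum_list (eql k n) = n"
    "set (eql k n) \<subseteq> {n div k, n div k + 1}"
    "sum_list (map f (eql k n)) = (n mod k) * f (n div k + 1) + (k - n mod k) * f (n div k)"
    "prod_list (eql k n) = (n div k + 1) ^ (n mod k) * (n div k) ^ (k - n mod k)"
proof -
  have r: "n mod k < k" using k by simp
  show "length (eql k n) = k" unfolding eql_def using r by simp
  have "n mod k * (n div k + 1) + (k - n mod k) * (n div k) = n div k * k + n mod k"
    using r by (simp add: algebra_simps diff_mult_distrib)
  also have "\<dots> = n" by simp
  finally show "sum_list (eql k n) = n" unfolding eql_def by (simp add: sum_list_replicate)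
  show "set (eql k n) \<subseteq> {n div k, n div k + 1}" unfolding eql_def by auto
  show "sum_list (map f (eql k n)) = (n mod k) * f (n div k + 1) + (k - n mod k) * f (n div k)"
    unfolding eql_def by (simp add: sum_list_replicate)
  show "prod_list (eql k n) = (n div k + 1) ^ (n mod k) * (n div k) ^ (k - n mod k)"
    unfolding eql_def by simp
qed

lemma parts_finite: "finite (parts k n)"
proof -
  have "parts k n \<subseteq> {xs. set xs \<subseteq> {..n} \<and> length xs = k}"
    unfolding parts_def by (auto simp: member_le_sum_list)
  then show ?thesis using finite_lists_length_eq[of "{..n}" k] by (rule finite_subset) simp
qed

lemma g_ff:
  assumes k: "3 \<le> k"
  shows "g k n = ff k n"
proof (induction n rule: less_induct)
  case (less n)
  show ?case
  proof (cases "n < k")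
    case True
    then show ?thesis by (simp add: g.simps ff_small)
  next
    case False
    let ?h = "\<lambda>xs. sum_list (map (g k) xs) + prod_list xs"
    have lt: "n div k + 1 < n" "n div k < n"
    proof -
      have "n div k \<le> n div 3" using k by (simp add: div_le_mono2)
      then show "n div k + 1 < n" "n div k < n" using False k by linarith+
    qed
    have mem: "eql k n \<in> parts k n"
      unfolding parts_def using eql_props[OF k, where n = n] lt by auto
    have val: "?h (eql k n) = ff k n"
      using eql_props(4)[OF k, where n = n and f = "g k"] eql_props(5)[OF k, where n = n] less.IH[OF lt(1)] less.IH[OF lt(2)] ff_rec[OF k, of n]
      by simp
    have le: "?h xs \<le> ff k n" if xs: "xs \<in> parts k n" for xs
    proof -
      have "map (g k) xs = map (ff k) xs"
        using xs less.IH unfolding parts_def by (intro map_cong) auto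
      moreover have "size (mset xs) = k" using xs unfolding parts_def by simp
      moreover have "sum_list xs = n" using xs unfolding parts_def by simp
      ultimately have "int (sum_mset (image_mset (ff k) (mset xs))) + int (prod_mset (mset xs)) \<le> int (ff k n)"
        using star[OF k, of "mset xs"] by (simp add: sum_mset_sum_list)
      then have "int (sum_list (map (ff k) xs)) + int (prod_list xs) \<le> int (ff k n)"
        by (simp add: sum_mset_sum_list prod_mset_prod_list flip: mset_map)
      then have "int (sum_list (map (ff k) xs) + prod_list xs) \<le> int (ff k n)"
        by (simp only: of_nat_add)
      then have "sum_list (map (ff k) xs) + prod_list xs \<le> ff k n"
        by (simp only: of_nat_le_iff)
      then show ?thesis by (simp only: \<open>map (g k) xs = map (ff k) xs\<close>)
    qed
    have "g k n = Max (?h ` parts k n)" using False by (simp add: g.simps)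
    also have "\<dots> = ff k n"
    proof (rule Max_eqI)
      show "finite (?h ` parts k n)" using parts_finite by (rule finite_imageI)
      show "y \<le> ff k n" if "y \<in> ?h ` parts k n" for y
        using that le by blast
      show "ff k n \<in> ?h ` parts k n" using image_eqI[where x = "eql k n" and f = ?h, OF val[symmetric] mem] .
    qed
    finally show ?thesis .
  qed
qed

theorem lemma4p2:
  fixes k n :: nat
  assumes "3 \<le> k" and "k \<le> n"
  shows "\<exists>ns. length ns = k \<and> sum_list ns = n
           \<and> (\<forall>i<k. \<forall>j<k. i \<noteq> j \<longrightarrow> \<bar>int (ns ! i) - int (ns ! j)\<bar> \<le> 1)
           \<and> g k n = sum_list (map (g k) ns) + prod_list ns"
proof (intro exI conjI)
  let ?ns = "eql k n"
  note E = eql_props[OF assms(1), where n = n]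
  show "length ?ns = k" "sum_list ?ns = n" using E by auto
  show "\<forall>i<k. \<forall>j<k. i \<noteq> j \<longrightarrow> \<bar>int (?ns ! i) - int (?ns ! j)\<bar> \<le> 1"
  proof (intro allI impI)
    fix i j assume "i < k" "j < k" "i \<noteq> j"
    then have "?ns ! i \<in> {n div k, n div k + 1}" "?ns ! j \<in> {n div k, n div k + 1}"
      using E(1,3) nth_mem by (metis subsetD)+
    then show "\<bar>int (?ns ! i) - int (?ns ! j)\<bar> \<le> 1" by auto
  qed
  have mm: "map (g k) ?ns = map (ff k) ?ns" using g_ff[OF assms(1)] by simp
  show "g k n = sum_list (map (g k) ?ns) + prod_list ?ns"
    using g_ff[OF assms(1), of n] ff_rec[OF assms(1), of n] E(4)[where f = "ff k"] E(5) unfolding mm by simp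
qed

end
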